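(* Let $\Omega=\{1,\dots,n\}$ and let $p,q\in\Delta_n=\{r\in\mathbb{R}^n: r\ge 0,\ \sum_i r_i=1\}$. Fix weights $\sigma_1,\dots,\sigma_n\ge 0$ and set $\Sigma=\mathrm{Diag}\{\sigma_1,\dots,\sigma_n\}$. Let $E,E'$ be two disjoint sets of $L$ observations each, drawn i.i.d. from $p$, and $F,F'$ two disjoint sets of $R$ observations each, drawn i.i.d. from $q$, all four sets being mutually independent. Put $\gamma=R/(L+R)$, $\bar\gamma=1-\gamma=L/(L+R)$, $M=2LR/(L+R)$. Let $\omega,\omega',\zeta,\zeta'\in\Delta_n$ be the empirical distributions of $E,E',F,F'$ respectively, let $$\chi=(\omega-\zeta)^T\Sigma(\omega'-\zeta')=\sum_{i=1}^n\sigma_i(\omega_i-\zeta_i)(\omega'_i-\zeta'_i),$$ and let the test $\mathcal T$ claim a difference ($H_1$) if and only if $|\chi|>\ell$. Suppose the threshold satisfies $$\ell\ge 2\sqrt2\,\theta M^{-1}\sqrt{\textstyle\sum_i\sigma_i^2p_i^2}$$ for some $\theta\ge1$. Then: (1) if $p=q$, the probability that $\mathcal T$ claims $H_1$ is at most $1/\theta^2$; (2) if $$\sum_i\sigma_i(p_i-q_i)^2>\ell+2\sqrt2\,\theta\Big[M^{-1/2}\sqrt{\textstyle\sum_i\sigma_i^2(p_i-q_i)^2(\gamma p_i+\bar\gamma q_i)}+M^{-1}\sqrt{\gamma\textstyle\sum_i\sigma_i^2p_i^2+\bar\gamma\sum_i\sigma_i^2q_i^2}\Big],$$ then the probability that $\mathcal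 T$ claims $H_1$ is at least $1-3/\theta^2$.
   Context: The empirical distribution of a finite set of observations with values in $\{1,\dots,n\}$ is the vector in $\Delta_n$ whose $i$-th entry is the fraction of observations equal to $i$. *)

theory Defs
  imports "HOL-Probability.Probability"
begin

text \<open>Probability prob_simplex Delta_n, vectors indexed by 1..n (values outside are irrelevant).\<close>
definition prob_simplex :: "nat \<Rightarrow> (nat \<Rightarrow> real) set" where
  "prob_simplex n = {r. (\<forall>i\<in>{1..n}. r i \<ge> 0) \<and> (\<Sum>i=1..n. r i) = 1}"

definition cat_pmf :: "nat \<Rightarrow> (nat \<Rightarrow> real) \<Rightarrow> nat pmf" where
  "cat_pmf n p = embed_pmf (\<lambda>i. if i \<in> {1..n} then p i else 0)"

definition sample_pmf :: "nat \<Rightarrow> 'a pmf \<Rightarrow> (nat \<Rightarrow> 'a) pmf" where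
  "sample_pmf L D = Pi_pmf {..<L} undefined (\<lambda>_. D)"

definition empirical :: "nat \<Rightarrow> (nat \<Rightarrow> nat) \<Rightarrow> nat \<Rightarrow> real" where
  "empirical L X i = real (card {k\<in>{..<L}. X k = i}) / real L"

definition chi_stat :: "nat \<Rightarrow> (nat \<Rightarrow> real) \<Rightarrow> (nat \<Rightarrow> real) \<Rightarrow> (nat \<Rightarrow> real)
    \<Rightarrow> (nat \<Rightarrow> real) \<Rightarrow> (nat \<Rightarrow> real) \<Rightarrow> real" where
  "chi_stat n \<sigma> \<omega> \<omega>' \<zeta> \<zeta>' = (\<Sum>i=1..n. \<sigma> i * (\<omega> i - \<zeta> i) * (\<omega>' i - \<zeta>' i))"

definition joint_pmf :: "nat \<Rightarrow> nat \<Rightarrow> nat \<Rightarrow> (nat \<Rightarrow> real) \<Rightarrow> (nat \<Rightarrow> real)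
    \<Rightarrow> (((nat \<Rightarrow> nat) \<times> (nat \<Rightarrow> nat)) \<times> ((nat \<Rightarrow> nat) \<times> (nat \<Rightarrow> nat))) pmf" where
  "joint_pmf n L R p q =
     pair_pmf (pair_pmf (sample_pmf L (cat_pmf n p)) (sample_pmf L (cat_pmf n p)))
              (pair_pmf (sample_pmf R (cat_pmf n q)) (sample_pmf R (cat_pmf n q)))"

definition claim_prob :: "nat \<Rightarrow> (nat \<Rightarrow> real) \<Rightarrow> real \<Rightarrow> nat \<Rightarrow> nat
    \<Rightarrow> (nat \<Rightarrow> real) \<Rightarrow> (nat \<Rightarrow> real) \<Rightarrow> real" where
  "claim_prob n \<sigma> l L R p q =
     measure_pmf.prob (joint_pmf n L R p q)
       {((E, E'), (F, F')). \<bar>chi_stat n \<sigma> (empirical L E) (empirical L E')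
                                     (empirical R F) (empirical R F')\<bar> > l}"

end

theory Submission
  imports Defs "HOL-Analysis.Analysis"
begin


lemma fin_sample: "finite (set_pmf D) \<Longrightarrow> finite (set_pmf (sample_pmf L D))"
  unfolding sample_pmf_def by (subst set_Pi_pmf) (auto intro!: finite_PiE_dflt)

lemma card_sum_real: "finite A \<Longrightarrow> real (card {k\<in>A. P k}) = (\<Sum>k\<in>A. if P k then 1 else 0)"
  by (simp add: sum.If_cases Int_def conj_commute)

lemma exp_indD: "measure_pmf.expectation D (\<lambda>v. if v = i then 1 else 0 :: real) = pmf D i"
proof -
  have "measure_pmf.expectation D (\<lambda>v. if v = i then 1 else 0 :: real) = measure_pmf.expectation D (indicator {i})"
    by (intro Bochner_Integration.integral_cong) (auto simp: indicator_def)
  also have "\<dots> = pmf D i" by (simp add: measure_pmf_single)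
  finally show ?thesis .
qed

lemma exp_ind1:
  assumes "k < L"
  shows "measure_pmf.expectation (sample_pmf L D) (\<lambda>X. if X k = i then 1 else 0 :: real) = pmf D i"
proof -
  have "measure_pmf.expectation (sample_pmf L D) (\<lambda>X. if X k = i then 1 else 0 :: real)
     = measure_pmf.expectation (map_pmf (\<lambda>X. X k) (sample_pmf L D)) (\<lambda>v. if v = i then 1 else 0 :: real)"
    by simp
  also have "map_pmf (\<lambda>X. X k) (sample_pmf L D) = D"
    unfolding sample_pmf_def using assms by (subst Pi_pmf_component) auto
  also have "measure_pmf.expectation D (\<lambda>v. if v = i then 1 else 0 :: real) = measure_pmf.expectation D (indicator {i})"
    by (intro Bochner_Integration.integral_cong) (auto simp: indicator_def)
  also have "\<dots> = pmf D i" by (simp add: measure_pmf_single)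
  finally show ?thesis .
qed

lemma exp_ind2:
  assumes "k < L" "k' < L" "k \<noteq> k'" and fin: "finite (set_pmf D)"
  shows "measure_pmf.expectation (sample_pmf L D)
     (\<lambda>X. (if X k = i then 1 else 0) * (if X k' = j then 1 else 0) :: real) = pmf D i * pmf D j"
proof -
  define f where "f = (\<lambda>x v. if x = k then (if v = i then 1 else 0) else if x = k' then (if v = j then 1 else 0) else (1::real))"
  have A: "{..<L} = insert k (insert k' ({..<L} - {k,k'}))" using assms by auto
  have P: "(\<Prod>x\<in>{..<L}. g x) = g k * g k' * (\<Prod>x\<in>{..<L} - {k,k'}. g x)" for g :: "nat \<Rightarrow> real"
    using assms by (subst A) (simp add: prod.insert_remove)
  have "(\<lambda>X. (if X k = i then 1 else 0) * (if X k' = j then 1 else 0) :: real) = (\<lambda>X. \<Prod>x\<in>{..<L}. f x (X x))"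
    using assms by (subst P) (auto simp: f_def intro!: prod.neutral)
  hence "measure_pmf.expectation (sample_pmf L D)
     (\<lambda>X. (if X k = i then 1 else 0) * (if X k' = j then 1 else 0) :: real)
     = (\<Prod>x\<in>{..<L}. measure_pmf.expectation D (f x))"
    unfolding sample_pmf_def
    by (simp, subst expectation_prod_Pi_pmf) (auto simp: f_def integrable_measure_pmf_finite fin)
  also have "\<dots> = measure_pmf.expectation D (f k) * measure_pmf.expectation D (f k')"
    using assms by (subst P) (auto simp: f_def intro!: prod.neutral)
  also have "measure_pmf.expectation D (f k) = pmf D i"
    using exp_indD[of D i] unfolding f_def by simp
  also have "measure_pmf.expectation D (f k') = pmf D j"
    using exp_indD[of D j] assms unfolding f_def by simp
  finally show ?thesis .
qed

lemma exp_ind_pair: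
  assumes "k < L" "k' < L" and fin: "finite (set_pmf D)"
  shows "measure_pmf.expectation (sample_pmf L D)
     (\<lambda>X. (if X k = i then 1 else 0) * (if X k' = j then 1 else 0) :: real) =
     (if k = k' then (if i = j then pmf D i else 0) else pmf D i * pmf D j)"
proof (cases "k = k'")
  case True
  show ?thesis
  proof (cases "i = j")
    case True
    then show ?thesis using \<open>k = k'\<close> exp_ind1[OF assms(1), of D i]
      by (simp add: if_distrib cong: if_cong)
  next
    case False
    then have "(\<lambda>X. (if X k = i then 1 else 0) * (if X k' = j then 1 else 0) :: real) = (\<lambda>X. 0)"
      using \<open>k = k'\<close> by (auto simp: fun_eq_iff)
    then show ?thesis using \<open>k = k'\<close> False by simp
  qed
qed (use exp_ind2[OF assms(1,2) _ fin] in auto)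

lemma double_sum_if: "(\<Sum>k<L. \<Sum>k'<L. if k = k' then a else b) = real L * a + (real L * real L - real L) * (b::real)"
proof -
  have "(\<Sum>k'<L. if k = k' then a else b) = a + (real L - 1) * b" if "k < L" for k
  proof -
    have "(\<Sum>k'<L. if k = k' then a else b) = (\<Sum>k'<L. (if k = k' then a - b else 0) + b)"
      by (intro sum.cong) auto
    also have "\<dots> = (a - b) + real L * b" using that by (simp add: sum.distrib)
    finally show ?thesis by (simp add: algebra_simps)
  qed
  hence "(\<Sum>k<L. \<Sum>k'<L. if k = k' then a else b) = (\<Sum>k<L. a + (real L - 1) * b)" by simp
  thus ?thesis by (simp add: algebra_simps)
qed

lemma emp_sum: "empirical L X i = (\<Sum>k<L. if X k = i then 1 else 0) / real L"
  unfolding empirical_def by (subst card_sum_real) auto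

lemma emp_mean:
  assumes "L > 0" and fin: "finite (set_pmf D)"
  shows "measure_pmf.expectation (sample_pmf L D) (\<lambda>X. empirical L X i) = pmf D i"
proof -
  have "measure_pmf.expectation (sample_pmf L D) (\<lambda>X. empirical L X i)
      = (\<Sum>k<L. measure_pmf.expectation (sample_pmf L D) (\<lambda>X. if X k = i then 1 else 0 :: real)) / real L"
    unfolding emp_sum
    by (simp add: Bochner_Integration.integral_sum integrable_measure_pmf_finite fin_sample[OF fin])
  also have "\<dots> = pmf D i" using assms by (simp add: exp_ind1)
  finally show ?thesis .
qed

lemma emp_second:
  assumes "L > 0" and fin: "finite (set_pmf D)"
  shows "measure_pmf.expectation (sample_pmf L D) (\<lambda>X. empirical L X i * empirical L X j)
     = pmf D i * pmf D j + ((if i = j then pmf D i else 0) - pmf D i * pmf D j) / real L"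
proof -
  have e: "empirical L X i * empirical L X j = (\<Sum>k<L. \<Sum>k'<L. (if X k = i then 1 else 0) * (if X k' = j then 1 else 0)) / (real L * real L)" for X
    unfolding emp_sum by (simp add: sum_product)
  have "measure_pmf.expectation (sample_pmf L D) (\<lambda>X. empirical L X i * empirical L X j)
      = (\<Sum>k<L. \<Sum>k'<L. measure_pmf.expectation (sample_pmf L D) (\<lambda>X. (if X k = i then 1 else 0) * (if X k' = j then 1 else 0) :: real)) / (real L * real L)"
    unfolding e
    by (simp add: Bochner_Integration.integral_sum integrable_measure_pmf_finite fin_sample[OF fin])
  also have "\<dots> = (\<Sum>k<L. \<Sum>k'<L. if k = k' then (if i = j then pmf D i else 0) else pmf D i * pmf D j) / (real L * real L)"
    using fin by (simp add: exp_ind_pair)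
  also have "\<dots> = pmf D i * pmf D j + ((if i = j then pmf D i else 0) - pmf D i * pmf D j) / real L"
    unfolding double_sum_if using assms by (simp add: field_simps)
  finally show ?thesis .
qed




lemma exp_pair_prod:
  fixes f g :: "_ \<Rightarrow> real"
  assumes fa: "finite (set_pmf A)" and fb: "finite (set_pmf B)"
  shows "measure_pmf.expectation (pair_pmf A B) (\<lambda>z. f (fst z) * g (snd z))
       = measure_pmf.expectation A f * measure_pmf.expectation B g"
proof -
  have "measure_pmf.expectation (pair_pmf A B) (\<lambda>z. f (fst z) * g (snd z))
      = (\<Sum>z\<in>set_pmf A \<times> set_pmf B. pmf (pair_pmf A B) z *\<^sub>R (f (fst z) * g (snd z)))"
    using fa fb by (intro integral_measure_pmf) auto
  also have "\<dots> = (\<Sum>a\<in>set_pmf A. \<Sum>b\<in>set_pmf B. (pmf A a * f a) * (pmf B b * g b))"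
    by (simp add: sum.cartesian_product' pmf_pair algebra_simps)
  also have "\<dots> = (\<Sum>a\<in>set_pmf A. pmf A a *\<^sub>R f a) * (\<Sum>b\<in>set_pmf B. pmf B b *\<^sub>R g b)"
    by (simp add: sum_product)
  also have "\<dots> = measure_pmf.expectation A f * measure_pmf.expectation B g"
    using fa fb by (simp add: integral_measure_pmf[of "set_pmf A"] integral_measure_pmf[of "set_pmf B"])
  finally show ?thesis .
qed

lemma rearr:
  fixes A A' :: "'a pmf" and B B' :: "'b pmf"
  shows
  "pair_pmf (pair_pmf A A') (pair_pmf B B') =
   map_pmf (\<lambda>((a,b),(a',b')). ((a,a'),(b,b'))) (pair_pmf (pair_pmf A B) (pair_pmf A' B'))"
proof (rule pmf_eqI)
  fix x :: "('a \<times> 'a) \<times> ('b \<times> 'b)"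
  obtain a a' b b' where x: "x = ((a,a'),(b,b'))" by (metis prod.collapse)
  have inj: "inj (\<lambda>((a::'a,b::'b),(a',b')). ((a,a'),(b,b')))"
    by (auto simp: inj_def)
  have "x = (\<lambda>((a,b),(a',b')). ((a,a'),(b,b'))) ((a,b),(a',b'))" by (simp add: x)
  hence "pmf (map_pmf (\<lambda>((a,b),(a',b')). ((a,a'),(b,b'))) (pair_pmf (pair_pmf A B) (pair_pmf A' B'))) x
       = pmf (pair_pmf (pair_pmf A B) (pair_pmf A' B')) ((a,b),(a',b'))"
    using pmf_map_inj'[OF inj] by metis
  thus "pmf (pair_pmf (pair_pmf A A') (pair_pmf B B')) x = pmf (map_pmf (\<lambda>((a,b),(a',b')). ((a,a'),(b,b'))) (pair_pmf (pair_pmf A B) (pair_pmf A' B'))) x"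
    by (simp add: x pmf_pair)
qed

lemma cat_pmf_pmf:
  assumes "p \<in> prob_simplex n"
  shows "pmf (cat_pmf n p) i = (if i \<in> {1..n} then p i else 0)"
proof -
  have "(\<integral>\<^sup>+ x. ennreal (if x \<in> {1..n} then p x else 0) \<partial>count_space UNIV) = 1"
  proof -
    have "(\<integral>\<^sup>+ x. ennreal (if x \<in> {1..n} then p x else 0) \<partial>count_space UNIV)
        = (\<integral>\<^sup>+ x. ennreal (p x) * indicator {1..n} x \<partial>count_space UNIV)"
      by (intro nn_integral_cong) (auto simp: indicator_def)
    also have "\<dots> = (\<Sum>x\<in>{1..n}. ennreal (p x))"
      by (subst nn_integral_indicator_finite) auto
    also have "\<dots> = ennreal (\<Sum>x\<in>{1..n}. p x)"
      using assms by (subst sum_ennreal) (auto simp: prob_simplex_def)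
    finally show ?thesis using assms by (simp add: prob_simplex_def)
  qed
  thus ?thesis unfolding cat_pmf_def using assms
    by (subst pmf_embed_pmf) (auto simp: prob_simplex_def)
qed

lemma cat_pmf_set:
  assumes "p \<in> prob_simplex n"
  shows "set_pmf (cat_pmf n p) \<subseteq> {1..n}"
  using cat_pmf_pmf[OF assms] by (auto simp: set_pmf_eq split: if_splits)

lemma cheb:
  fixes X :: "'a \<Rightarrow> real"
  assumes fin: "finite (set_pmf D)" and t: "t \<ge> 0" and th: "\<theta> > 0"
    and E: "measure_pmf.expectation D (\<lambda>x. (X x - c)^2) \<le> t^2 / \<theta>^2"
  shows "measure_pmf.prob D {x. \<bar>X x - c\<bar> > t} \<le> 1 / \<theta>^2"
proof (cases "t = 0")
  case True
  hence E0: "measure_pmf.expectation D (\<lambda>x. (X x - c)^2) = 0"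
    using E by (simp add: antisym Bochner_Integration.integral_nonneg_AE)
  have "AE x in D. (X x - c)^2 = 0"
    using E0 by (subst (asm) integral_nonneg_eq_0_iff_AE) (auto simp: integrable_measure_pmf_finite fin)
  hence "AE x in D. \<not> (\<bar>X x - c\<bar> > t)" using True by (auto elim!: eventually_mono)
  from measure_pmf.prob_eq_0_AE[OF this]
  have "measure_pmf.prob D {x. \<bar>X x - c\<bar> > t} = 0" by simp
  thus ?thesis by simp
next
  case False
  hence tp: "t > 0" using t by simp
  have "measure_pmf.prob D {x. \<bar>X x - c\<bar> > t} = measure_pmf.expectation D (indicator {x. \<bar>X x - c\<bar> > t})"
    by simp
  also have "\<dots> \<le> measure_pmf.expectation D (\<lambda>x. (X x - c)^2 / t^2)"
  proof (intro integral_mono)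
    fix x
    show "indicator {x. \<bar>X x - c\<bar> > t} x \<le> (X x - c)^2 / t^2"
    proof (cases "\<bar>X x - c\<bar> > t")
      case True
      hence "t^2 \<le> (X x - c)^2" using tp
        by (metis abs_ge_zero abs_le_square_iff less_imp_le abs_of_pos)
      thus ?thesis using True tp by (simp add: indicator_def)
    qed (simp add: indicator_def)
  qed (auto simp: integrable_measure_pmf_finite fin)
  also have "\<dots> = measure_pmf.expectation D (\<lambda>x. (X x - c)^2) / t^2" by simp
  also have "\<dots> \<le> 1 / \<theta>^2"
  proof -
    have "measure_pmf.expectation D (\<lambda>x. (X x - c)^2) / t^2 \<le> (t^2 / \<theta>^2) / t^2"
      using E tp by (intro divide_right_mono) auto
    thus ?thesis using tp by simp
  qed
  finally show ?thesis .
qed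




lemma var_formula:
  fixes X :: "'a \<Rightarrow> real"
  assumes fin: "finite (set_pmf D)" and mu: "measure_pmf.expectation D X = \<mu>"
  shows "measure_pmf.expectation D (\<lambda>x. (X x - \<mu>)^2) = measure_pmf.expectation D (\<lambda>x. (X x)^2) - \<mu>^2"
proof -
  have e: "(\<lambda>x. (X x - \<mu>)^2) = (\<lambda>x. (X x)^2 - (2 * \<mu> * X x - \<mu>^2))"
    by (auto simp: power2_eq_square algebra_simps)
  show ?thesis unfolding e using fin mu
    by (simp add: integrable_measure_pmf_finite power2_eq_square)
qed

lemma chi_mean_gen:
  fixes a :: "'x \<Rightarrow> nat \<Rightarrow> real"
  assumes fin: "finite (set_pmf D)" and I: "finite I"
  shows "measure_pmf.expectation (pair_pmf D D) (\<lambda>z. \<Sum>i\<in>I. s i * a (fst z) i * a (snd z) i)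
       = (\<Sum>i\<in>I. s i * (measure_pmf.expectation D (\<lambda>x. a x i))^2)"
proof -
  have "measure_pmf.expectation (pair_pmf D D) (\<lambda>z. \<Sum>i\<in>I. s i * a (fst z) i * a (snd z) i)
     = (\<Sum>i\<in>I. s i * measure_pmf.expectation (pair_pmf D D) (\<lambda>z. a (fst z) i * a (snd z) i))"
    using fin by (simp add: Bochner_Integration.integral_sum integrable_measure_pmf_finite mult.assoc)
  also have "\<dots> = (\<Sum>i\<in>I. s i * (measure_pmf.expectation D (\<lambda>x. a x i))^2)"
  proof (intro sum.cong refl)
    fix i
    show "s i * measure_pmf.expectation (pair_pmf D D) (\<lambda>z. a (fst z) i * a (snd z) i) = s i * (measure_pmf.expectation D (\<lambda>x. a x i))^2"
      using exp_pair_prod[OF fin fin, of "\<lambda>x. a x i" "\<lambda>x. a x i"] by (simp add: power2_eq_square)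
  qed
  finally show ?thesis .
qed

lemma chi_second_gen:
  fixes a :: "'x \<Rightarrow> nat \<Rightarrow> real"
  assumes fin: "finite (set_pmf D)" and I: "finite I"
  shows "measure_pmf.expectation (pair_pmf D D) (\<lambda>z. (\<Sum>i\<in>I. s i * a (fst z) i * a (snd z) i)^2)
       = (\<Sum>i\<in>I. \<Sum>j\<in>I. s i * s j * (measure_pmf.expectation D (\<lambda>x. a x i * a x j))^2)"
proof -
  have e: "(\<Sum>i\<in>I. s i * a (fst z) i * a (snd z) i)^2 =
     (\<Sum>i\<in>I. \<Sum>j\<in>I. s i * s j * ((a (fst z) i * a (fst z) j) * (a (snd z) i * a (snd z) j)))" for z
    by (simp add: power2_eq_square sum_product algebra_simps)
  have "measure_pmf.expectation (pair_pmf D D) (\<lambda>z. (\<Sum>i\<in>I. s i * a (fst z) i * a (snd z) i)^2)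
     = (\<Sum>i\<in>I. \<Sum>j\<in>I. s i * s j * measure_pmf.expectation (pair_pmf D D) (\<lambda>z. (a (fst z) i * a (fst z) j) * (a (snd z) i * a (snd z) j)))"
    unfolding e using fin by (simp add: Bochner_Integration.integral_sum integrable_measure_pmf_finite)
  also have "\<dots> = (\<Sum>i\<in>I. \<Sum>j\<in>I. s i * s j * (measure_pmf.expectation D (\<lambda>x. a x i * a x j))^2)"
  proof (intro sum.cong refl)
    fix i j
    show "s i * s j * measure_pmf.expectation (pair_pmf D D) (\<lambda>z. (a (fst z) i * a (fst z) j) * (a (snd z) i * a (snd z) j)) = s i * s j * (measure_pmf.expectation D (\<lambda>x. a x i * a x j))^2"
      using exp_pair_prod[OF fin fin, of "\<lambda>x. a x i * a x j" "\<lambda>x. a x i * a x j"] by (simp add: power2_eq_square)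
  qed
  finally show ?thesis .
qed

lemma a_mean:
  assumes "L > 0" "R > 0" "finite (set_pmf DE)" "finite (set_pmf DF)"
  shows "measure_pmf.expectation (pair_pmf (sample_pmf L DE) (sample_pmf R DF))
     (\<lambda>z. empirical L (fst z) i - empirical R (snd z) i) = pmf DE i - pmf DF i"
  using assms expectation_pair_pmf_fst[where f="\<lambda>X. empirical L X i" and p="sample_pmf L DE" and q="sample_pmf R DF"]
    expectation_pair_pmf_snd[where f="\<lambda>X. empirical R X i" and p="sample_pmf L DE" and q="sample_pmf R DF"]
  by (simp add: integrable_measure_pmf_finite fin_sample emp_mean)

lemma a_second:
  assumes "L > 0" "R > 0" and fE: "finite (set_pmf DE)" and fF: "finite (set_pmf DF)"
  shows "measure_pmf.expectation (pair_pmf (sample_pmf L DE) (sample_pmf R DF))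
     (\<lambda>z. (empirical L (fst z) i - empirical R (snd z) i) * (empirical L (fst z) j - empirical R (snd z) j))
   = (pmf DE i - pmf DF i) * (pmf DE j - pmf DF j)
     + (if i = j then pmf DE i / real L + pmf DF i / real R else 0)
     - (pmf DE i * pmf DE j / real L + pmf DF i * pmf DF j / real R)"
proof -
  let ?P = "pair_pmf (sample_pmf L DE) (sample_pmf R DF)"
  have fs: "finite (set_pmf (sample_pmf L DE))" "finite (set_pmf (sample_pmf R DF))"
    using fE fF by (auto intro: fin_sample)
  have e: "(\<lambda>z. (empirical L (fst z) i - empirical R (snd z) i) * (empirical L (fst z) j - empirical R (snd z) j))
    = (\<lambda>z. (empirical L (fst z) i * empirical L (fst z) j + empirical R (snd z) i * empirical R (snd z) j)
         - (empirical L (fst z) i * empirical R (snd z) j + empirical L (fst z) j * empirical R (snd z) i))"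
    by (auto simp: algebra_simps)
  have "measure_pmf.expectation ?P
     (\<lambda>z. (empirical L (fst z) i - empirical R (snd z) i) * (empirical L (fst z) j - empirical R (snd z) j))
   = (measure_pmf.expectation (sample_pmf L DE) (\<lambda>X. empirical L X i * empirical L X j)
      + measure_pmf.expectation (sample_pmf R DF) (\<lambda>X. empirical R X i * empirical R X j))
     - (measure_pmf.expectation (sample_pmf L DE) (\<lambda>X. empirical L X i) * measure_pmf.expectation (sample_pmf R DF) (\<lambda>X. empirical R X j)
      + measure_pmf.expectation (sample_pmf L DE) (\<lambda>X. empirical L X j) * measure_pmf.expectation (sample_pmf R DF) (\<lambda>X. empirical R X i))"
    unfolding e using fs
      expectation_pair_pmf_fst[where f="\<lambda>X. empirical L X i * empirical L X j" and p="sample_pmf L DE" and q="sample_pmf R DF"]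
      expectation_pair_pmf_snd[where f="\<lambda>X. empirical R X i * empirical R X j" and p="sample_pmf L DE" and q="sample_pmf R DF"]
      exp_pair_prod[OF fs, of "\<lambda>X. empirical L X i" "\<lambda>X. empirical R X j"]
      exp_pair_prod[OF fs, of "\<lambda>X. empirical L X j" "\<lambda>X. empirical R X i"]
    by (simp add: integrable_measure_pmf_finite)
  also have "\<dots> = (pmf DE i - pmf DF i) * (pmf DE j - pmf DF j)
     + (if i = j then pmf DE i / real L + pmf DF i / real R else 0)
     - (pmf DE i * pmf DE j / real L + pmf DF i * pmf DF j / real R)"
    using assms by (simp add: emp_mean emp_second diff_divide_distrib algebra_simps)
  finally show ?thesis .
qed




lemma sq_le_sum:
  fixes p :: "nat \<Rightarrow> real"
  assumes I: "finite I" and p: "\<forall>i\<in>I. p i \<ge> 0" and s: "(\<Sum>i\<in>I. p i) = 1"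
  shows "(\<Sum>i\<in>I. s i * (p i)^2)^2 \<le> (\<Sum>i\<in>I. (s i)^2 * (p i)^2)"
proof -
  have "(\<Sum>i\<in>I. s i * (p i)^2)^2 = (\<Sum>i\<in>I. (s i * p i) * p i)^2" by (simp add: power2_eq_square mult.assoc)
  also have "\<dots> \<le> (\<Sum>i\<in>I. (s i * p i)^2) * (\<Sum>i\<in>I. (p i)^2)" by (rule Cauchy_Schwarz_ineq_sum)
  also have "(\<Sum>i\<in>I. (p i)^2) \<le> 1"
  proof -
    have "p i \<le> 1" if "i \<in> I" for i
      using member_le_sum[of i I p] that p s I by auto
    hence "(\<Sum>i\<in>I. (p i)^2) \<le> (\<Sum>i\<in>I. p i)"
      using p by (intro sum_mono) (auto simp: power2_eq_square mult_le_cancel_right1 intro: mult_left_le)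
    thus ?thesis using s by simp
  qed
  hence "(\<Sum>i\<in>I. (s i * p i)^2) * (\<Sum>i\<in>I. (p i)^2) \<le> (\<Sum>i\<in>I. (s i * p i)^2)"
    by (intro mult_left_le) (auto intro: sum_nonneg)
  finally show ?thesis by (simp add: power_mult_distrib)
qed

lemma conv2: "(a::real) \<ge> 0 \<Longrightarrow> b \<ge> 0 \<Longrightarrow> (a * x + b * y)^2 \<le> (a + b) * (a * x^2 + b * y^2)"
proof -
  assume "a \<ge> 0" "b \<ge> 0"
  hence "0 \<le> a * b * (x - y)^2" by simp
  thus ?thesis by (simp add: power2_eq_square algebra_simps)
qed

lemma alg:
  fixes p q \<sigma> :: "nat \<Rightarrow> real" and \<alpha> \<beta> :: real
  assumes I: "finite I" and \<sigma>: "\<forall>i\<in>I. \<sigma> i \<ge> 0" and p: "\<forall>i\<in>I. p i \<ge> 0" and q: "\<forall>i\<in>I. q i \<ge> 0"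
    and sp: "(\<Sum>i\<in>I. p i) = 1" and sq: "(\<Sum>i\<in>I. q i) = 1" and a: "\<alpha> \<ge> 0" and b: "\<beta> \<ge> 0"
  shows "(\<Sum>i\<in>I. \<Sum>j\<in>I. \<sigma> i * \<sigma> j * ((p i - q i) * (p j - q j)
            + (if i = j then \<alpha> * p i + \<beta> * q i else 0) - (\<alpha> * p i * p j + \<beta> * q i * q j))^2)
         - (\<Sum>i\<in>I. \<sigma> i * (p i - q i)^2)^2
       \<le> 2 * (\<Sum>i\<in>I. (\<sigma> i)^2 * (p i - q i)^2 * (\<alpha> * p i + \<beta> * q i))
         + 2 * (\<alpha> + \<beta>) * (\<alpha> * (\<Sum>i\<in>I. (\<sigma> i)^2 * (p i)^2) + \<beta> * (\<Sum>i\<in>I. (\<sigma> i)^2 * (q i)^2))"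
proof -
  define d where "d i = p i - q i" for i
  define Dg where "Dg i = \<alpha> * p i + \<beta> * q i" for i
  define K where "K i j = \<alpha> * p i * p j + \<beta> * q i * q j" for i j
  define Sp where "Sp = (\<Sum>i\<in>I. (\<sigma> i)^2 * (p i)^2)"
  define Sq where "Sq = (\<Sum>i\<in>I. (\<sigma> i)^2 * (q i)^2)"
  have Dg0: "Dg i \<ge> 0" if "i \<in> I" for i using that p q a b by (simp add: Dg_def)
  have K0: "K i j \<ge> 0" if "i \<in> I" "j \<in> I" for i j using that p q a b by (simp add: K_def)
  have pt: "\<sigma> i * \<sigma> j * (d i * d j + (if i = j then Dg i else 0) - K i j)^2 - \<sigma> i * \<sigma> j * ((d i)^2 * (d j)^2)
     \<le> (if i = j then (\<sigma> i)^2 * (Dg i)^2 + 2 * ((\<sigma> i)^2 * (d i)^2 * Dg i) else 0)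
        + \<sigma> i * \<sigma> j * (K i j)^2 - 2 * ((\<sigma> i * d i * p i) * (\<sigma> j * d j * p j) * \<alpha> + (\<sigma> i * d i * q i) * (\<sigma> j * d j * q j) * \<beta>)"
    if "i \<in> I" "j \<in> I" for i j
  proof (cases "i = j")
    case True
    have "0 \<le> \<sigma> i * \<sigma> i * (2 * Dg i * K i i)" using that \<sigma> Dg0 K0 by simp
    then show ?thesis using True by (simp add: power2_eq_square K_def algebra_simps)
  next
    case False
    then show ?thesis by (simp add: power2_eq_square K_def algebra_simps)
  qed
  have s1: "(\<Sum>i\<in>I. \<sigma> i * (d i)^2)^2 = (\<Sum>i\<in>I. \<Sum>j\<in>I. \<sigma> i * \<sigma> j * ((d i)^2 * (d j)^2))"
    by (simp add: power2_eq_square sum_product algebra_simps)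
  have "(\<Sum>i\<in>I. \<Sum>j\<in>I. \<sigma> i * \<sigma> j * (d i * d j + (if i = j then Dg i else 0) - K i j)^2) - (\<Sum>i\<in>I. \<sigma> i * (d i)^2)^2
      = (\<Sum>i\<in>I. \<Sum>j\<in>I. \<sigma> i * \<sigma> j * (d i * d j + (if i = j then Dg i else 0) - K i j)^2 - \<sigma> i * \<sigma> j * ((d i)^2 * (d j)^2))"
    unfolding s1 by (simp add: sum_subtractf)
  also have "\<dots> \<le> (\<Sum>i\<in>I. \<Sum>j\<in>I. (if i = j then (\<sigma> i)^2 * (Dg i)^2 + 2 * ((\<sigma> i)^2 * (d i)^2 * Dg i) else 0)
        + \<sigma> i * \<sigma> j * (K i j)^2 - 2 * ((\<sigma> i * d i * p i) * (\<sigma> j * d j * p j) * \<alpha> + (\<sigma> i * d i * q i) * (\<sigma> j * d j * q j) * \<beta>))"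
    using pt by (intro sum_mono) auto
  also have "\<dots> = (\<Sum>i\<in>I. (\<sigma> i)^2 * (Dg i)^2) + 2 * (\<Sum>i\<in>I. (\<sigma> i)^2 * (d i)^2 * Dg i)
        + (\<Sum>i\<in>I. \<Sum>j\<in>I. \<sigma> i * \<sigma> j * (K i j)^2)
        - 2 * (\<alpha> * (\<Sum>i\<in>I. \<sigma> i * d i * p i)^2 + \<beta> * (\<Sum>i\<in>I. \<sigma> i * d i * q i)^2)"
    using I by (simp add: sum.distrib sum_subtractf sum_distrib_left sum_product power2_eq_square
        algebra_simps)
  also have "\<dots> \<le> (\<alpha> + \<beta>) * (\<alpha> * Sp + \<beta> * Sq) + 2 * (\<Sum>i\<in>I. (\<sigma> i)^2 * (d i)^2 * Dg i)
        + (\<alpha> + \<beta>) * (\<alpha> * Sp + \<beta> * Sq)"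
  proof -
    have A: "(\<Sum>i\<in>I. (\<sigma> i)^2 * (Dg i)^2) \<le> (\<alpha> + \<beta>) * (\<alpha> * Sp + \<beta> * Sq)"
    proof -
      have "(\<Sum>i\<in>I. (\<sigma> i)^2 * (Dg i)^2) \<le> (\<Sum>i\<in>I. (\<sigma> i)^2 * ((\<alpha> + \<beta>) * (\<alpha> * (p i)^2 + \<beta> * (q i)^2)))"
        unfolding Dg_def using a b by (intro sum_mono mult_left_mono conv2) auto
      also have "\<dots> = (\<alpha> + \<beta>) * (\<alpha> * Sp + \<beta> * Sq)"
        by (simp add: Sp_def Sq_def sum_distrib_left sum.distrib algebra_simps)
      finally show ?thesis .
    qed
    have B: "(\<Sum>i\<in>I. \<Sum>j\<in>I. \<sigma> i * \<sigma> j * (K i j)^2) \<le> (\<alpha> + \<beta>) * (\<alpha> * Sp + \<beta> * Sq)"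
    proof -
      have "(\<Sum>i\<in>I. \<Sum>j\<in>I. \<sigma> i * \<sigma> j * (K i j)^2) \<le>
         (\<Sum>i\<in>I. \<Sum>j\<in>I. \<sigma> i * \<sigma> j * ((\<alpha> + \<beta>) * (\<alpha> * (p i * p j)^2 + \<beta> * (q i * q j)^2)))"
        unfolding K_def using a b \<sigma>
        by (intro sum_mono mult_left_mono) (auto simp: mult.assoc intro!: conv2[of \<alpha> \<beta> "p _ * p _" "q _ * q _", simplified mult.assoc])
      also have "\<dots> = (\<alpha> + \<beta>) * (\<alpha> * (\<Sum>i\<in>I. \<sigma> i * (p i)^2)^2 + \<beta> * (\<Sum>i\<in>I. \<sigma> i * (q i)^2)^2)"
        by (simp add: power2_eq_square sum_product sum_distrib_left sum.distrib algebra_simps)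
      also have "\<dots> \<le> (\<alpha> + \<beta>) * (\<alpha> * Sp + \<beta> * Sq)"
        unfolding Sp_def Sq_def using a b sq_le_sum[OF I p sp, of \<sigma>] sq_le_sum[OF I q sq, of \<sigma>]
        by (intro mult_left_mono add_mono) auto
      finally show ?thesis .
    qed
    have C: "0 \<le> \<alpha> * (\<Sum>i\<in>I. \<sigma> i * d i * p i)^2 + \<beta> * (\<Sum>i\<in>I. \<sigma> i * d i * q i)^2"
      using a b by simp
    show ?thesis using A B C by (smt (verit))
  qed
  finally have F: "(\<Sum>i\<in>I. \<Sum>j\<in>I. \<sigma> i * \<sigma> j * (d i * d j + (if i = j then Dg i else 0) - K i j)^2) - (\<Sum>i\<in>I. \<sigma> i * (d i)^2)^2
     \<le> (\<alpha> + \<beta>) * (\<alpha> * Sp + \<beta> * Sq) + 2 * (\<Sum>i\<in>I. (\<sigma> i)^2 * (d i)^2 * Dg i)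
        + (\<alpha> + \<beta>) * (\<alpha> * Sp + \<beta> * Sq)" .
  have eqR: "(\<alpha> + \<beta>) * (\<alpha> * Sp + \<beta> * Sq) + 2 * (\<Sum>i\<in>I. (\<sigma> i)^2 * (d i)^2 * Dg i)
        + (\<alpha> + \<beta>) * (\<alpha> * Sp + \<beta> * Sq) = 2 * (\<Sum>i\<in>I. (\<sigma> i)^2 * (p i - q i)^2 * (\<alpha> * p i + \<beta> * q i))
         + 2 * (\<alpha> + \<beta>) * (\<alpha> * (\<Sum>i\<in>I. (\<sigma> i)^2 * (p i)^2) + \<beta> * (\<Sum>i\<in>I. (\<sigma> i)^2 * (q i)^2))"
    by (simp add: d_def Dg_def Sp_def Sq_def)
  have eqL: "(\<Sum>i\<in>I. \<Sum>j\<in>I. \<sigma> i * \<sigma> j * (d i * d j + (if i = j then Dg i else 0) - K i j)^2) - (\<Sum>i\<in>I. \<sigma> i * (d i)^2)^2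
     = (\<Sum>i\<in>I. \<Sum>j\<in>I. \<sigma> i * \<sigma> j * ((p i - q i) * (p j - q j)
            + (if i = j then \<alpha> * p i + \<beta> * q i else 0) - (\<alpha> * p i * p j + \<beta> * q i * q j))^2)
         - (\<Sum>i\<in>I. \<sigma> i * (p i - q i)^2)^2"
    unfolding d_def Dg_def K_def ..
  show ?thesis using F unfolding eqL eqR .
qed




lemma h1:
  fixes l \<theta> M S :: real
  assumes "\<theta> \<ge> 1" "M > 0" "S \<ge> 0" "l \<ge> 2 * sqrt 2 * \<theta> * (1 / M) * sqrt S"
  shows "8 * S / M^2 \<le> l^2 / \<theta>^2"
proof -
  have c0: "0 \<le> 2 * sqrt 2 * \<theta> * (1 / M) * sqrt S" using assms by simp
  have "(2 * sqrt 2 * \<theta> * (1 / M) * sqrt S)^2 \<le> l^2"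
    using assms c0 by (intro power_mono) auto
  also have "(2 * sqrt 2 * \<theta> * (1 / M) * sqrt S)^2 = \<theta>^2 * (8 * S / M^2)"
    using assms by (simp add: power_mult_distrib power_divide)
  finally show ?thesis using assms by (simp add: field_simps)
qed

lemma h2:
  fixes \<theta> M A B t :: real
  assumes "\<theta> \<ge> 1" "M > 0" "A \<ge> 0" "B \<ge> 0"
    and t: "t = 2 * sqrt 2 * \<theta> * ((1 / sqrt M) * sqrt A + (1 / M) * sqrt B)"
  shows "4 / M * A + 8 / M^2 * B \<le> t^2 / \<theta>^2"
proof -
  have "t^2 / \<theta>^2 = 8 * ((1 / sqrt M) * sqrt A + (1 / M) * sqrt B)^2"
    using assms by (simp add: power_mult_distrib)
  also have "((1 / sqrt M) * sqrt A + (1 / M) * sqrt B)^2 = A / M + B / M^2 + 2 * ((1 / sqrt M) * sqrt A) * ((1 / M) * sqrt B)"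
    using assms by (simp add: power2_sum power_divide power_mult_distrib)
  finally have "t^2 / \<theta>^2 = 8 * (A / M + B / M^2) + 16 * ((1 / sqrt M) * sqrt A) * ((1 / M) * sqrt B)"
    by simp
  moreover have "0 \<le> ((1 / sqrt M) * sqrt A) * ((1 / M) * sqrt B)" using assms by simp
  moreover have "4 / M * A \<le> 8 * (A / M)" using assms by (simp add: field_simps)
  ultimately show ?thesis by simp
qed




theorem proposition1:
  fixes n L R :: nat and p q \<sigma> :: "nat \<Rightarrow> real" and l \<theta> \<gamma> \<gamma>b M :: real
  assumes p: "p \<in> prob_simplex n" and q: "q \<in> prob_simplex n"
    and \<sigma>: "\<forall>i\<in>{1..n}. \<sigma> i \<ge> 0"
    and L: "L > 0" and R: "R > 0"
    and \<gamma>_def: "\<gamma> = real R / (real L + real R)"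
    and \<gamma>b_def: "\<gamma>b = 1 - \<gamma>"
    and M_def: "M = 2 * real L * real R / (real L + real R)"
    and \<theta>: "\<theta> \<ge> 1"
    and l: "l \<ge> 2 * sqrt 2 * \<theta> * (1 / M) * sqrt (\<Sum>i=1..n. (\<sigma> i)\<^sup>2 * (p i)\<^sup>2)"
  shows "((\<forall>i\<in>{1..n}. p i = q i) \<longrightarrow> claim_prob n \<sigma> l L R p q \<le> 1 / \<theta>\<^sup>2)
       \<and> ((\<Sum>i=1..n. \<sigma> i * (p i - q i)\<^sup>2) > l + 2 * sqrt 2 * \<theta> *
             ((1 / sqrt M) * sqrt (\<Sum>i=1..n. (\<sigma> i)\<^sup>2 * (p i - q i)\<^sup>2 * (\<gamma> * p i + \<gamma>b * q i))
              + (1 / M) * sqrt (\<gamma> * (\<Sum>i=1..n. (\<sigma> i)\<^sup>2 * (p i)\<^sup>2)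
                                + \<gamma>b * (\<Sum>i=1..n. (\<sigma> i)\<^sup>2 * (q i)\<^sup>2)))
          \<longrightarrow> claim_prob n \<sigma> l L R p q \<ge> 1 - 3 / \<theta>\<^sup>2)"
proof -
  define DE where "DE = cat_pmf n p"
  define DF where "DF = cat_pmf n q"
  define Dp where "Dp = pair_pmf (sample_pmf L DE) (sample_pmf R DF)"
  define Q where "Q = pair_pmf Dp Dp"
  define a where "a z i = empirical L (fst z) i - empirical R (snd z) i" for z :: "(nat \<Rightarrow> nat) \<times> (nat \<Rightarrow> nat)" and i
  define chi where "chi z = (\<Sum>i\<in>{1..n}. \<sigma> i * a (fst z) i * a (snd z) i)" for z
  define Sp where "Sp = (\<Sum>i=1..n. (\<sigma> i)\<^sup>2 * (p i)\<^sup>2)"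
  define Sq where "Sq = (\<Sum>i=1..n. (\<sigma> i)\<^sup>2 * (q i)\<^sup>2)"
  define A where "A = (\<Sum>i=1..n. (\<sigma> i)\<^sup>2 * (p i - q i)\<^sup>2 * (\<gamma> * p i + \<gamma>b * q i))"
  define B where "B = \<gamma> * Sp + \<gamma>b * Sq"
  define \<mu> where "\<mu> = (\<Sum>i=1..n. \<sigma> i * (p i - q i)\<^sup>2)"
  have fE: "finite (set_pmf DE)" unfolding DE_def by (rule finite_subset[OF cat_pmf_set[OF p]]) auto
  have fF: "finite (set_pmf DF)" unfolding DF_def by (rule finite_subset[OF cat_pmf_set[OF q]]) auto
  have fDp: "finite (set_pmf Dp)" unfolding Dp_def using fE fF by (auto intro: fin_sample)
  have fQ: "finite (set_pmf Q)" unfolding Q_def using fDp by auto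
  have pE: "pmf DE i = p i" if "i \<in> {1..n}" for i using that cat_pmf_pmf[OF p] by (simp add: DE_def)
  have pF: "pmf DF i = q i" if "i \<in> {1..n}" for i using that cat_pmf_pmf[OF q] by (simp add: DF_def)
  have p0: "\<forall>i\<in>{1..n}. p i \<ge> 0" and ps: "(\<Sum>i=1..n. p i) = 1" using p by (auto simp: prob_simplex_def)
  have q0: "\<forall>i\<in>{1..n}. q i \<ge> 0" and qs: "(\<Sum>i=1..n. q i) = 1" using q by (auto simp: prob_simplex_def)
  have Mpos: "M > 0" using L R by (simp add: M_def)
  have claim: "claim_prob n \<sigma> l L R p q = measure_pmf.prob Q {z. \<bar>chi z\<bar> > l}"
  proof -
    have "joint_pmf n L R p q = map_pmf (\<lambda>((a,b),(a',b')). ((a,a'),(b,b'))) Q"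
      unfolding joint_pmf_def Q_def Dp_def DE_def DF_def by (rule rearr)
    thus ?thesis unfolding claim_prob_def
      by (simp add: chi_def a_def chi_stat_def vimage_def case_prod_beta mult.assoc)
  qed
  have Emean: "measure_pmf.expectation Q chi = \<mu>"
  proof -
    have "measure_pmf.expectation Q chi = (\<Sum>i\<in>{1..n}. \<sigma> i * (measure_pmf.expectation Dp (\<lambda>x. a x i))^2)"
      unfolding Q_def chi_def by (rule chi_mean_gen[OF fDp]) simp
    also have "\<dots> = \<mu>" unfolding \<mu>_def
      by (intro sum.cong refl) (simp add: a_def Dp_def a_mean[OF L R fE fF] pE pF)
    finally show ?thesis .
  qed
  have Esec: "measure_pmf.expectation Q (\<lambda>z. (chi z)^2) =
     (\<Sum>i\<in>{1..n}. \<Sum>j\<in>{1..n}. \<sigma> i * \<sigma> j * ((p i - q i) * (p j - q j)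
            + (if i = j then (1 / real L) * p i + (1 / real R) * q i else 0) - ((1 / real L) * p i * p j + (1 / real R) * q i * q j))^2)"
  proof -
    have "measure_pmf.expectation Q (\<lambda>z. (chi z)^2) = (\<Sum>i\<in>{1..n}. \<Sum>j\<in>{1..n}. \<sigma> i * \<sigma> j * (measure_pmf.expectation Dp (\<lambda>x. a x i * a x j))^2)"
      unfolding Q_def chi_def by (rule chi_second_gen[OF fDp]) simp
    also have "\<dots> = (\<Sum>i\<in>{1..n}. \<Sum>j\<in>{1..n}. \<sigma> i * \<sigma> j * ((p i - q i) * (p j - q j)
            + (if i = j then (1 / real L) * p i + (1 / real R) * q i else 0) - ((1 / real L) * p i * p j + (1 / real R) * q i * q j))^2)"
      by (intro sum.cong refl) (simp add: a_def Dp_def a_second[OF L R fE fF] pE pF)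
    finally show ?thesis .
  qed
  have Var: "measure_pmf.expectation Q (\<lambda>z. (chi z - \<mu>)^2) \<le> 4 / M * A + 8 / M^2 * B"
  proof -
    have "measure_pmf.expectation Q (\<lambda>z. (chi z - \<mu>)^2) = measure_pmf.expectation Q (\<lambda>z. (chi z)^2) - \<mu>^2"
      by (rule var_formula[OF fQ Emean])
    also have "\<dots> \<le> 2 * (\<Sum>i\<in>{1..n}. (\<sigma> i)^2 * (p i - q i)^2 * ((1 / real L) * p i + (1 / real R) * q i))
         + 2 * ((1 / real L) + (1 / real R)) * ((1 / real L) * Sp + (1 / real R) * Sq)"
      unfolding Esec \<mu>_def Sp_def Sq_def
      by (rule alg[OF _ \<sigma> p0 q0 ps qs]) auto
    also have "\<dots> = 4 / M * A + 8 / M^2 * B"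
    proof -
      have e1: "1 / real L = 2 * \<gamma> / M" and e2: "1 / real R = 2 * \<gamma>b / M"
        using L R by (auto simp: \<gamma>_def \<gamma>b_def M_def field_simps add_nonneg_eq_0_iff)
      have e3: "\<gamma> + \<gamma>b = 1" by (simp add: \<gamma>b_def)
      have S1: "(\<Sum>i\<in>{1..n}. (\<sigma> i)^2 * (p i - q i)^2 * ((1 / real L) * p i + (1 / real R) * q i)) = 2 / M * A"
        unfolding A_def e1 e2 sum_distrib_left by (intro sum.cong refl) (simp add: algebra_simps)
      have S2: "(1 / real L) + (1 / real R) = 2 / M" unfolding e1 e2 using e3
        by (simp add: add_divide_distrib[symmetric] distrib_left[symmetric])
      show ?thesis unfolding S1 S2 unfolding e1 e2 B_def using Mpos
        by (simp add: power2_eq_square field_simps)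
    qed
    finally show ?thesis .
  qed
  have Sp0: "Sp \<ge> 0" unfolding Sp_def by (intro sum_nonneg) auto
  have Sq0: "Sq \<ge> 0" unfolding Sq_def by (intro sum_nonneg) auto
  have g0: "\<gamma> \<ge> 0" "\<gamma>b \<ge> 0" using L R by (auto simp: \<gamma>_def \<gamma>b_def field_simps)
  have A0: "A \<ge> 0" unfolding A_def using g0 p0 q0 by (intro sum_nonneg) auto
  have B0: "B \<ge> 0" unfolding B_def using g0 Sp0 Sq0 by simp
  have part1: "claim_prob n \<sigma> l L R p q \<le> 1 / \<theta>\<^sup>2" if eq: "\<forall>i\<in>{1..n}. p i = q i"
  proof -
    have "\<mu> = 0" unfolding \<mu>_def using eq by simp
    have "A = 0" unfolding A_def using eq by simp
    have "Sq = Sp" unfolding Sp_def Sq_def using eq by simp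
    hence "B = Sp" unfolding B_def \<gamma>b_def by (simp add: algebra_simps)
    have "measure_pmf.expectation Q (\<lambda>z. (chi z - 0)^2) \<le> 8 * Sp / M^2"
      using Var \<open>\<mu> = 0\<close> \<open>A = 0\<close> \<open>B = Sp\<close> by simp
    also have "\<dots> \<le> l^2 / \<theta>^2" using h1[OF \<theta> Mpos Sp0] l by (simp add: Sp_def)
    finally have E0: "measure_pmf.expectation Q (\<lambda>z. (chi z - 0)^2) \<le> l^2 / \<theta>^2" .
    have l0: "l \<ge> 0"
    proof -
      have "0 \<le> 2 * sqrt 2 * \<theta> * (1 / M) * sqrt Sp" using Mpos \<theta> Sp0 by simp
      thus ?thesis using l unfolding Sp_def by linarith
    qed
    have "measure_pmf.prob Q {z. \<bar>chi z - 0\<bar> > l} \<le> 1 / \<theta>^2"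
      using cheb[OF fQ l0 _ E0] \<theta> by simp
    thus ?thesis using claim by simp
  qed
  have part2: "claim_prob n \<sigma> l L R p q \<ge> 1 - 3 / \<theta>\<^sup>2"
    if hyp: "\<mu> > l + 2 * sqrt 2 * \<theta> * ((1 / sqrt M) * sqrt A + (1 / M) * sqrt B)"
  proof -
    define t where "t = 2 * sqrt 2 * \<theta> * ((1 / sqrt M) * sqrt A + (1 / M) * sqrt B)"
    have t0: "t \<ge> 0" unfolding t_def using \<theta> Mpos A0 B0 by simp
    have "measure_pmf.expectation Q (\<lambda>z. (chi z - \<mu>)^2) \<le> t^2 / \<theta>^2"
      using Var h2[OF \<theta> Mpos A0 B0 t_def] by simp
    from cheb[OF fQ t0 _ this] \<theta>
    have P: "measure_pmf.prob Q {z. \<bar>chi z - \<mu>\<bar> > t} \<le> 1 / \<theta>^2" by simp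
    have sub: "UNIV - {z. \<bar>chi z - \<mu>\<bar> > t} \<subseteq> {z. \<bar>chi z\<bar> > l}"
      using hyp unfolding t_def[symmetric] by auto
    have "1 - 1 / \<theta>^2 \<le> measure_pmf.prob Q (UNIV - {z. \<bar>chi z - \<mu>\<bar> > t})"
      using measure_pmf.prob_compl[of "{z. \<bar>chi z - \<mu>\<bar> > t}" Q] P by simp
    also have "\<dots> \<le> measure_pmf.prob Q {z. \<bar>chi z\<bar> > l}"
      by (rule measure_pmf.finite_measure_mono[OF sub]) simp
    finally have "1 - 1 / \<theta>^2 \<le> claim_prob n \<sigma> l L R p q" using claim by simp
    moreover have "1 / \<theta>^2 \<le> 3 / \<theta>^2" by (simp add: divide_right_mono)
    ultimately show ?thesis by simp
  qed
  show ?thesis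
    using part1 part2 unfolding \<mu>_def A_def B_def Sp_def Sq_def by blast
qed


end
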